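(* Let $S$ be a profinite semigroup, let $\operatorname{End} S$ be the monoid of continuous endomorphisms of $S$ and $\operatorname{Aut} S$ the group of continuous automorphisms of $S$, both equipped with the compact-open topology. Then $\operatorname{End} S$ (respectively, $\operatorname{Aut} S$) is compact if and only if $S$ admits a fundamental system of open fully invariant (respectively, characteristic) congruences. Moreover, if $\operatorname{End} S$ (respectively, $\operatorname{Aut} S$) is compact, then it is profinite and the compact-open topology on it coincides with the topology of pointwise convergence.
   Context: A congruence $\rho$ on $S$ is open if it is an open subset of $S\times S$. A congruence $\rho$ is fully invariant if for every continuous endomorphism $f$ of $S$, $(x,y)\in\rho$ implies $(f(x),f(y))\in\rho$; it is characteristic if this holds for every continuous automorphism $f$ of $S$. A fundamental system of open fully invariant (resp. characteristic) congruences is a family of such congruences such that every open congruence on $S$ contains a member of the family (i.e., a fundamental system of entourages for the unique uniformity of $S$, whose entourages are the neighbourhoods of the diagonal). Profinite means compact, Hausdorff and totally disconnected (as a topological monoid/group). *)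

theory Defs
  imports "HOL-Analysis.Analysis"
begin

definition totally_disconnected_space :: "'a topology \<Rightarrow> bool" where
  "totally_disconnected_space X \<longleftrightarrow>
     (\<forall>x \<in> topspace X. connected_component_of_set X x = {x})"

definition profinite_semigroup :: "'a::{semigroup_mult,topological_space} itself \<Rightarrow> bool" where
  "profinite_semigroup (_::'a itself) \<longleftrightarrow>
     compact_space (euclidean :: 'a topology) \<and> Hausdorff_space (euclidean :: 'a topology) \<and>
     totally_disconnected_space (euclidean :: 'a topology) \<and>
     continuous_map (prod_topology euclidean euclidean) (euclidean :: 'a topology) (\<lambda>(x,y). x * y)"

definition cont_End :: "('a::{semigroup_mult,topological_space} \<Rightarrow> 'a) set" where
  "cont_End = {f. continuous_map euclidean euclidean f \<and> (\<forall>x y. f (x * y) = f x * f y)}"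

definition cont_Aut :: "('a::{semigroup_mult,topological_space} \<Rightarrow> 'a) set" where
  "cont_Aut = {f \<in> cont_End. homeomorphic_map euclidean euclidean f}"

definition compact_open_topology ::
  "('a::topological_space \<Rightarrow> 'b::topological_space) set \<Rightarrow> ('a \<Rightarrow> 'b) topology" where
  "compact_open_topology E =
     topology_generated_by {{f \<in> E. f ` K \<subseteq> U} | K U. compact K \<and> open U}"

definition pointwise_topology ::
  "('a \<Rightarrow> 'b::topological_space) set \<Rightarrow> ('a \<Rightarrow> 'b) topology" where
  "pointwise_topology E = subtopology (product_topology (\<lambda>_. euclidean) UNIV) E"

definition profinite_comp_monoid :: "('a \<Rightarrow> 'a) topology \<Rightarrow> bool" where
  "profinite_comp_monoid T \<longleftrightarrow>
     compact_space T \<and> Hausdorff_space T \<and> totally_disconnected_space T \<and>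
     continuous_map (prod_topology T T) T (\<lambda>(f,g). f \<circ> g)"

definition profinite_comp_group :: "('a \<Rightarrow> 'a) topology \<Rightarrow> bool" where
  "profinite_comp_group T \<longleftrightarrow> profinite_comp_monoid T \<and> continuous_map T T inv"

definition semigroup_congruence :: "('a::semigroup_mult \<times> 'a) set \<Rightarrow> bool" where
  "semigroup_congruence \<rho> \<longleftrightarrow> equiv UNIV \<rho> \<and>
     (\<forall>x y z. (x, y) \<in> \<rho> \<longrightarrow> (z * x, z * y) \<in> \<rho> \<and> (x * z, y * z) \<in> \<rho>)"

definition invariant_under :: "('a \<Rightarrow> 'a) set \<Rightarrow> ('a \<times> 'a) set \<Rightarrow> bool" where
  "invariant_under F \<rho> \<longleftrightarrow> (\<forall>f \<in> F. \<forall>x y. (x, y) \<in> \<rho> \<longrightarrow> (f x, f y) \<in> \<rho>)"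

text \<open>S admits a fundamental system of open congruences invariant under F
  (F = End S: fully invariant; F = Aut S: characteristic).\<close>
definition has_fundamental_system_invariant ::
  "('a::{semigroup_mult,topological_space} \<Rightarrow> 'a) set \<Rightarrow> bool" where
  "has_fundamental_system_invariant F \<longleftrightarrow>
     (\<exists>\<C>. (\<forall>\<sigma> \<in> \<C>. semigroup_congruence \<sigma> \<and> open \<sigma> \<and> invariant_under F \<sigma>) \<and>
          (\<forall>\<rho>. semigroup_congruence \<rho> \<and> open \<rho> \<longrightarrow> (\<exists>\<sigma> \<in> \<C>. \<sigma> \<subseteq> \<rho>)))"

end

theory Submission
  imports Defs
begin



lemma prof_compact: "profinite_semigroup TYPE('a::{semigroup_mult,topological_space}) \<Longrightarrow> compact (UNIV::'a set)"
  unfolding profinite_semigroup_def compact_space_def by simp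

lemma prof_Haus: "profinite_semigroup TYPE('a::{semigroup_mult,topological_space}) \<Longrightarrow> Hausdorff_space (euclidean::'a topology)"
  unfolding profinite_semigroup_def by simp

lemma prof_T2: assumes "profinite_semigroup TYPE('a::{semigroup_mult,topological_space})" "(x::'a) \<noteq> y"
  shows "\<exists>U V. open U \<and> open V \<and> x\<in>U \<and> y\<in>V \<and> U\<inter>V={}"
  using prof_Haus[OF assms(1)] assms(2) unfolding Hausdorff_space_def disjnt_def by auto

lemma prof_closed: assumes "profinite_semigroup TYPE('a::{semigroup_mult,topological_space})" "compact (K::'a set)"
  shows "closed K"
  using compactin_imp_closedin[OF prof_Haus[OF assms(1)], of K] assms(2) by simp

lemma prof_closed_single: assumes "profinite_semigroup TYPE('a::{semigroup_mult,topological_space})"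
  shows "closed {x::'a}"
  by (rule prof_closed[OF assms]) simp

lemma prof_cpt: assumes "profinite_semigroup TYPE('a::{semigroup_mult,topological_space})" "closed (K::'a set)"
  shows "compact K"
  using compact_Int_closed[OF prof_compact[OF assms(1)] assms(2)] by simp

lemma prof_mult: assumes "profinite_semigroup TYPE('a::{semigroup_mult,topological_space})"
  shows "continuous_on UNIV (\<lambda>z::'a\<times>'a. fst z * snd z)"
proof -
  have "continuous_map euclidean euclidean (\<lambda>(x::'a,y). x * y)"
    using assms unfolding profinite_semigroup_def by simp
  then show ?thesis by (simp add: case_prod_unfold)
qed

lemma cont_mult: assumes "profinite_semigroup TYPE('a::{semigroup_mult,topological_space})"
  and "continuous_on UNIV (f::'b::topological_space \<Rightarrow> 'a)" "continuous_on UNIV g"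
  shows "continuous_on UNIV (\<lambda>p. f p * g p)"
proof -
  have "continuous_on UNIV (\<lambda>p. (f p, g p))" using assms(2,3) by (intro continuous_on_Pair)
  from continuous_on_compose2[OF prof_mult[OF assms(1)] this] show ?thesis by simp
qed

lemma clopen_nbhd: assumes P: "profinite_semigroup TYPE('a::{semigroup_mult,topological_space})"
  and "open U" "(x::'a) \<in> U"
  shows "\<exists>D. open D \<and> closed D \<and> x\<in>D \<and> D\<subseteq>U"
proof -
  let ?X = "euclidean :: 'a topology"
  have td: "connected_component_of_set ?X x = {x}"
    using P unfolding profinite_semigroup_def totally_disconnected_space_def by auto
  have comp: "{x} \<in> connected_components_of ?X"
    unfolding connected_components_of_def using td by force
  have "separated_between ?X {x} (-U)"
  proof (rule separated_between_compact_connected_component)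
    show "locally_compact_space ?X"
      using P compact_imp_locally_compact_space unfolding profinite_semigroup_def by blast
    show "Hausdorff_space ?X" using prof_Haus[OF P] .
    show "{x} \<in> connected_components_of ?X" by (rule comp)
    show "compactin ?X {x}" by simp
    show "closedin ?X (-U)" using assms(2) by (simp add: closed_Compl)
    show "disjnt {x} (-U)" using assms(3) by simp
  qed
  then obtain D where "closedin ?X D" "openin ?X D" "{x} \<subseteq> D" "-U \<subseteq> topspace ?X - D"
    unfolding separated_between by blast
  then show ?thesis by (intro exI[of _ D]) auto
qed



lemma tube_open: assumes "compact (UNIV::'c::topological_space set)" "open (W::('c\<times>'b::topological_space) set)"
  shows "open {b. \<forall>c. (c,b)\<in>W}"
proof (subst open_subopen, intro ballI)
  fix b assume "b \<in> {b. \<forall>c. (c,b)\<in>W}"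
  then have sub: "UNIV \<times> {b} \<subseteq> W" by auto
  have "openin (prod_topology euclidean euclidean) W" using assms(2) by simp
  from tube_lemma_left[OF this _ _ sub] assms(1)
  obtain U V where "open V" "b \<in> V" "UNIV \<subseteq> U" "U \<times> V \<subseteq> W" by auto
  then show "\<exists>T. open T \<and> b \<in> T \<and> T \<subseteq> {b. \<forall>c. (c,b)\<in>W}" by (intro exI[of _ V]) auto
qed

lemma open_iff_clopen: assumes "open D" "closed D" "continuous_on UNIV f" "continuous_on UNIV g"
  shows "open {p. f p \<in> D \<longleftrightarrow> g p \<in> D}"
proof -
  have "{p. f p \<in> D \<longleftrightarrow> g p \<in> D} = (f -` D \<inter> g -` D) \<union> (f -` (-D) \<inter> g -` (-D))" by auto
  moreover have "open (-D)" using assms(2) by auto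
  ultimately show ?thesis using assms
    by (metis open_Int open_Un open_vimage)
qed

definition ctx :: "'a::semigroup_mult set \<Rightarrow> 'a \<Rightarrow> bool \<times> 'a set \<times> 'a set \<times> ('a\<times>'a) set" where
  "ctx D x = (x\<in>D, {u. u*x\<in>D}, {w. x*w\<in>D}, {(u,w). u*x*w\<in>D})"

definition Rel :: "'a::semigroup_mult set \<Rightarrow> ('a\<times>'a) set" where
  "Rel D = {(x,y). ctx D x = ctx D y}"

lemma ctx_left: "ctx D (z*x) = (case ctx D x of (b,L,R,M) \<Rightarrow> (z\<in>L, {u. u*z\<in>L}, {w. (z,w)\<in>M}, {(u,w). (u*z,w)\<in>M}))"
  unfolding ctx_def by (simp add: mult.assoc)

lemma ctx_right: "ctx D (x*z) = (case ctx D x of (b,L,R,M) \<Rightarrow> (z\<in>R, {u. (u,z)\<in>M}, {w. z*w\<in>R}, {(u,w). (u,z*w)\<in>M}))"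
  unfolding ctx_def by (simp add: mult.assoc)

lemma Rel_cong: "semigroup_congruence (Rel D)"
proof -
  have "equiv UNIV (Rel D)"
    unfolding Rel_def equiv_def refl_on_def sym_def trans_def by auto
  moreover have "(z * x, z * y) \<in> Rel D \<and> (x * z, y * z) \<in> Rel D" if "(x,y) \<in> Rel D" for x y z
    using that unfolding Rel_def by (simp only: mem_Collect_eq case_prod_conv ctx_left[of D z x] ctx_left[of D z y] ctx_right[of D x z] ctx_right[of D y z])
  ultimately show ?thesis unfolding semigroup_congruence_def by blast
qed



lemma ctx_eq: "ctx D x = ctx D y \<longleftrightarrow> (x\<in>D \<longleftrightarrow> y\<in>D) \<and> (\<forall>u. u*x\<in>D \<longleftrightarrow> u*y\<in>D)
   \<and> (\<forall>w. x*w\<in>D \<longleftrightarrow> y*w\<in>D) \<and> (\<forall>u w. u*x*w\<in>D \<longleftrightarrow> u*y*w\<in>D)"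
  unfolding ctx_def by (simp add: set_eq_iff)

lemma Rel_open: assumes P: "profinite_semigroup TYPE('a::{semigroup_mult,topological_space})"
  and D: "open (D::'a set)" "closed D"
  shows "open (Rel D)"
proof -
  have cU: "compact (UNIV::'a set)" using prof_compact[OF P] .
  have cUU: "compact (UNIV::('a\<times>'a) set)" using compact_Times[OF cU cU] by simp
  have o1: "open {z::'a\<times>'a. fst z \<in> D \<longleftrightarrow> snd z \<in> D}"
    by (rule open_iff_clopen[OF D]) (auto intro!: continuous_intros)
  have c1: "continuous_on UNIV (\<lambda>p::'a\<times>'a\<times>'a. fst p * fst (snd p))"
    by (rule cont_mult[OF P]) (auto intro!: continuous_intros)
  have c2: "continuous_on UNIV (\<lambda>p::'a\<times>'a\<times>'a. fst p * snd (snd p))"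
    by (rule cont_mult[OF P]) (auto intro!: continuous_intros)
  have "open {p. fst p * fst (snd p) \<in> D \<longleftrightarrow> fst p * snd (snd p) \<in> D}"
    using open_iff_clopen[OF D c1 c2] by simp
  from tube_open[OF cU this]
  have o2: "open {z::'a\<times>'a. \<forall>u. u * fst z \<in> D \<longleftrightarrow> u * snd z \<in> D}" by simp
  have c3: "continuous_on UNIV (\<lambda>p::'a\<times>'a\<times>'a. fst (snd p) * fst p)"
    by (rule cont_mult[OF P]) (auto intro!: continuous_intros)
  have c4: "continuous_on UNIV (\<lambda>p::'a\<times>'a\<times>'a. snd (snd p) * fst p)"
    by (rule cont_mult[OF P]) (auto intro!: continuous_intros)
  have "open {p. fst (snd p) * fst p \<in> D \<longleftrightarrow> snd (snd p) * fst p \<in> D}"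
    using open_iff_clopen[OF D c3 c4] by simp
  from tube_open[OF cU this]
  have o3: "open {z::'a\<times>'a. \<forall>w. fst z * w \<in> D \<longleftrightarrow> snd z * w \<in> D}" by simp
  have c5: "continuous_on UNIV (\<lambda>p::('a\<times>'a)\<times>'a\<times>'a. fst (fst p) * fst (snd p))"
    by (rule cont_mult[OF P]) (auto intro!: continuous_intros)
  have c6: "continuous_on UNIV (\<lambda>p::('a\<times>'a)\<times>'a\<times>'a. fst (fst p) * fst (snd p) * snd (fst p))"
    by (rule cont_mult[OF P c5]) (auto intro!: continuous_intros)
  have c7: "continuous_on UNIV (\<lambda>p::('a\<times>'a)\<times>'a\<times>'a. fst (fst p) * snd (snd p))"
    by (rule cont_mult[OF P]) (auto intro!: continuous_intros)
  have c8: "continuous_on UNIV (\<lambda>p::('a\<times>'a)\<times>'a\<times>'a. fst (fst p) * snd (snd p) * snd (fst p))"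
    by (rule cont_mult[OF P c7]) (auto intro!: continuous_intros)
  have "open {p. fst (fst p) * fst (snd p) * snd (fst p) \<in> D \<longleftrightarrow> fst (fst p) * snd (snd p) * snd (fst p) \<in> D}"
    using open_iff_clopen[OF D c6 c8] by simp
  from tube_open[OF cUU this]
  have o4: "open {z::'a\<times>'a. \<forall>u w. u * fst z * w \<in> D \<longleftrightarrow> u * snd z * w \<in> D}" by simp
  have eq: "Rel D = {z::'a\<times>'a. fst z \<in> D \<longleftrightarrow> snd z \<in> D}
     \<inter> {z::'a\<times>'a. \<forall>u. u * fst z \<in> D \<longleftrightarrow> u * snd z \<in> D}
     \<inter> {z::'a\<times>'a. \<forall>w. fst z * w \<in> D \<longleftrightarrow> snd z * w \<in> D}
     \<inter> {z::'a\<times>'a. \<forall>u w. u * fst z * w \<in> D \<longleftrightarrow> u * snd z * w \<in> D}"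
    unfolding Rel_def by (rule set_eqI) (simp only: split_paired_all mem_Collect_eq Int_iff case_prod_conv ctx_eq fst_conv snd_conv conj_assoc)
  show ?thesis unfolding eq by (intro open_Int o1 o2 o3 o4)
qed


lemma cong_Inter: assumes "\<forall>\<sigma>\<in>A. semigroup_congruence \<sigma>"
  shows "semigroup_congruence (\<Inter>A)"
proof -
  have e: "\<And>\<sigma>. \<sigma> \<in> A \<Longrightarrow> equiv UNIV \<sigma>" and
    c: "\<And>\<sigma> x y z. \<sigma> \<in> A \<Longrightarrow> (x, y) \<in> \<sigma> \<Longrightarrow> (z * x, z * y) \<in> \<sigma> \<and> (x * z, y * z) \<in> \<sigma>"
    using assms unfolding semigroup_congruence_def by blast+
  have "refl_on UNIV (\<Inter>A)" using e unfolding refl_on_def equiv_def by blast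
  moreover have "sym (\<Inter>A)" using e unfolding sym_def equiv_def by blast
  moreover have "trans (\<Inter>A)" using e unfolding trans_def equiv_def by blast
  ultimately have "equiv UNIV (\<Inter>A)" unfolding equiv_def by simp
  moreover have "\<forall>x y z. (x, y) \<in> \<Inter>A \<longrightarrow> (z * x, z * y) \<in> \<Inter>A \<and> (x * z, y * z) \<in> \<Inter>A"
    using c by blast
  ultimately show ?thesis unfolding semigroup_congruence_def by blast
qed

lemma fundamental_cong: assumes P: "profinite_semigroup TYPE('a::{semigroup_mult,topological_space})"
  and W: "open (W::('a\<times>'a) set)" "\<And>x. (x,x) \<in> W"
  shows "\<exists>\<rho>. semigroup_congruence \<rho> \<and> open \<rho> \<and> \<rho> \<subseteq> W"
proof -
  have "\<forall>x. \<exists>D. open D \<and> closed D \<and> x \<in> D \<and> D \<times> D \<subseteq> W"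
  proof
    fix x
    obtain A B where "open A" "open B" "(x,x) \<in> A \<times> B" "A \<times> B \<subseteq> W"
      by (rule open_prod_elim[OF W(1) W(2)[of x]])
    then have "x \<in> A" "x \<in> B" by simp_all
    moreover note \<open>x \<in> A\<close> \<open>x \<in> B\<close>
    moreover have "open (A \<inter> B)" using \<open>open A\<close> \<open>open B\<close> by blast
    ultimately obtain D where "open D" "closed D" "x \<in> D" "D \<subseteq> A \<inter> B"
      using clopen_nbhd[OF P, of "A \<inter> B" x] by blast
    moreover have "D \<times> D \<subseteq> W" using \<open>A \<times> B \<subseteq> W\<close> \<open>D \<subseteq> A \<inter> B\<close> by blast
    ultimately show "\<exists>D. open D \<and> closed D \<and> x \<in> D \<and> D \<times> D \<subseteq> W" by blast
  qed
  from choice[OF this] obtain D where D0: "\<forall>x. open (D x) \<and> closed (D x) \<and> x \<in> D x \<and> D x \<times> D x \<subseteq> W" by blast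
  then have D: "\<And>x. open (D x) \<and> closed (D x) \<and> x \<in> D x \<and> D x \<times> D x \<subseteq> W" by blast
  have Dx: "\<And>x. x \<in> D x" and Do: "\<And>x. open (D x)" using D by simp_all
  have cov: "UNIV \<subseteq> (\<Union>x\<in>UNIV. D x)" using Dx by blast
  obtain X where X: "finite X" "UNIV \<subseteq> (\<Union>x\<in>X. D x)"
  proof (rule compactE_image[OF prof_compact[OF P], of UNIV D, OF Do cov])
    fix C' assume "C' \<subseteq> UNIV" "finite C'" "UNIV \<subseteq> (\<Union>x\<in>C'. D x)"
    then show thesis using that by blast
  qed
  let ?r = "\<Inter>((\<lambda>x. Rel (D x)) ` X)"
  have "semigroup_congruence ?r" by (rule cong_Inter) (simp add: Rel_cong)
  moreover have "open ?r" using X(1) Rel_open[OF P] D by (intro open_INT) blast+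
  moreover have "?r \<subseteq> W"
  proof
    fix z assume z: "z \<in> ?r"
    obtain a b where ab: "z = (a,b)" by (cases z)
    obtain x where "x \<in> X" "a \<in> D x" using X(2) by blast
    then have "ctx (D x) a = ctx (D x) b" using z ab unfolding Rel_def by blast
    then have "b \<in> D x" using \<open>a \<in> D x\<close> unfolding ctx_eq by blast
    then show "z \<in> W" using D \<open>a \<in> D x\<close> ab by blast
  qed
  ultimately show ?thesis by blast
qed



lemma co_topspace: "topspace (compact_open_topology E) = E"
proof -
  have "\<Union>{{f \<in> E. f ` K \<subseteq> U} | K U. compact K \<and> open U} = E"
  proof
    show "\<Union>{{f \<in> E. f ` K \<subseteq> U} | K U. compact K \<and> open U} \<subseteq> E" by blast
    have "{f \<in> E. f ` {} \<subseteq> UNIV} \<in> {{f \<in> E. f ` K \<subseteq> U} | K U. compact K \<and> open U}" by blast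
    then show "E \<subseteq> \<Union>{{f \<in> E. f ` K \<subseteq> U} | K U. compact K \<and> open U}" by auto
  qed
  then show ?thesis unfolding compact_open_topology_def by simp
qed

lemma co_basis: assumes "compact K" "open U"
  shows "openin (compact_open_topology E) {f\<in>E. f`K\<subseteq>U}"
  unfolding compact_open_topology_def openin_topology_generated_by_iff
  by (rule generate_topology_on.Basis) (use assms in blast)

lemma pw_eq: "pointwise_topology E = subtopology euclidean E"
  unfolding pointwise_topology_def euclidean_product_topology ..

lemma pw_topspace: "topspace (pointwise_topology E) = E"
  unfolding pw_eq by simp

lemma fun_open_eval: "open U \<Longrightarrow> open {g::'b\<Rightarrow>'c::topological_space. g x \<in> U}"
  using open_vimage[of U "\<lambda>g::'b\<Rightarrow>'c. g x"] by (simp add: vimage_def)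

lemma fun_closed_eval: "closed U \<Longrightarrow> closed {g::'b\<Rightarrow>'c::topological_space. g x \<in> U}"
  using closed_vimage[of U "\<lambda>g::'b\<Rightarrow>'c. g x"] by (simp add: vimage_def)

lemma co_imp_pw:
  assumes H: "\<And>K U f. compact K \<Longrightarrow> open U \<Longrightarrow> f\<in>E \<Longrightarrow> f`K\<subseteq>U \<Longrightarrow>
     \<exists>N. openin (pointwise_topology E) N \<and> f \<in> N \<and> N \<subseteq> {g\<in>E. g`K\<subseteq>U}"
  and "openin (compact_open_topology E) V"
  shows "openin (pointwise_topology E) V"
proof -
  have "generate_topology_on {{f \<in> E. f ` K \<subseteq> U} | K U. compact K \<and> open U} V"
    using assms(2) unfolding compact_open_topology_def openin_topology_generated_by_iff .
  then show ?thesis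
  proof (induction rule: generate_topology_on.induct)
    case Empty then show ?case by simp
  next
    case (Int a b) then show ?case by (simp add: openin_Int)
  next
    case (UN K) then show ?case by (intro openin_Union) blast
  next
    case (Basis s)
    then obtain K U where KU: "compact K" "open U" "s = {f \<in> E. f ` K \<subseteq> U}" by blast
    show ?case
    proof (subst openin_subopen, intro ballI)
      fix f assume "f \<in> s"
      then have "f \<in> E" "f ` K \<subseteq> U" using KU by auto
      from H[OF KU(1,2) this] show "\<exists>T. openin (pointwise_topology E) T \<and> f \<in> T \<and> T \<subseteq> s"
        using KU(3) by simp
    qed
  qed
qed

lemma co_eval_cont: "continuous_map (compact_open_topology E) euclidean (\<lambda>f. f x)"
proof -
  have "openin (compact_open_topology E) {f \<in> topspace (compact_open_topology E). f x \<in> U}"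
    if "open U" for U
  proof -
    have "{f \<in> topspace (compact_open_topology E). f x \<in> U} = {f\<in>E. f`{x}\<subseteq>U}"
      by (simp add: co_topspace)
    then show ?thesis using co_basis[OF _ that, of "{x}" E] by simp
  qed
  then show ?thesis unfolding continuous_map_def by simp
qed

lemma co_pw_cont: "continuous_map (compact_open_topology E) (pointwise_topology E) id"
proof -
  have "continuous_map (compact_open_topology E) (product_topology (\<lambda>_. euclidean) UNIV) id"
    unfolding continuous_map_componentwise_UNIV by (simp add: co_eval_cont)
  then show ?thesis unfolding pointwise_topology_def
    by (rule continuous_map_into_subtopology) (simp add: co_topspace)
qed

lemma pw_Haus: assumes P: "profinite_semigroup TYPE('a::{semigroup_mult,topological_space})"
  shows "Hausdorff_space (pointwise_topology (E :: ('a \<Rightarrow> 'a) set))"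
  unfolding pointwise_topology_def
  by (rule Hausdorff_space_subtopology) (use prof_Haus[OF P] in \<open>simp add: Hausdorff_space_product_topology\<close>)

lemma fun_compact: assumes P: "profinite_semigroup TYPE('a::{semigroup_mult,topological_space})"
  shows "compact (UNIV :: ('a \<Rightarrow> 'a) set)"
proof -
  have "compact_space (product_topology (\<lambda>_::'a. euclidean :: 'a topology) UNIV)"
    unfolding compact_space_product_topology using P unfolding profinite_semigroup_def by simp
  then show ?thesis unfolding euclidean_product_topology compact_space_def by simp
qed



lemma cong_refl: "semigroup_congruence \<sigma> \<Longrightarrow> (x,x) \<in> \<sigma>"
  unfolding semigroup_congruence_def equiv_def refl_on_def by blast
lemma cong_sym: "semigroup_congruence \<sigma> \<Longrightarrow> (x,y) \<in> \<sigma> \<Longrightarrow> (y,x) \<in> \<sigma>"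
  unfolding semigroup_congruence_def equiv_def sym_def by blast
lemma cong_trans: "semigroup_congruence \<sigma> \<Longrightarrow> (x,y) \<in> \<sigma> \<Longrightarrow> (y,z) \<in> \<sigma> \<Longrightarrow> (x,z) \<in> \<sigma>"
  unfolding semigroup_congruence_def equiv_def trans_def by blast

lemma cls_open: "open (\<sigma>::('a::topological_space\<times>'a) set) \<Longrightarrow> open {y. (x,y)\<in>\<sigma>}"
proof -
  assume "open \<sigma>"
  moreover have "continuous_on UNIV (\<lambda>y::'a. (x,y))" by (intro continuous_on_Pair continuous_on_const continuous_on_id)
  ultimately show ?thesis using open_vimage[of \<sigma> "\<lambda>y::'a. (x,y)"] by (simp add: vimage_def)
qed

lemma cong_closed: assumes "semigroup_congruence (\<sigma>::('a::{semigroup_mult,topological_space}\<times>'a) set)" "open \<sigma>"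
  shows "closed \<sigma>"
proof -
  have "open (-\<sigma>)"
  proof (subst open_subopen, intro ballI)
    fix z assume z: "z \<in> -\<sigma>"
    obtain a b where ab: "z = (a,b)" by (cases z)
    let ?T = "{y. (a,y)\<in>\<sigma>} \<times> {y. (b,y)\<in>\<sigma>}"
    have "open ?T" using cls_open[OF assms(2)] by (intro open_Times)
    moreover have "z \<in> ?T" using ab cong_refl[OF assms(1)] by simp
    moreover have "?T \<subseteq> -\<sigma>"
    proof
      fix p assume p: "p \<in> ?T"
      obtain c d where cd: "p = (c,d)" by (cases p)
      show "p \<in> -\<sigma>"
      proof
        assume "p \<in> \<sigma>"
        then have "(a,d) \<in> \<sigma>" using p cd cong_trans[OF assms(1)] by auto
        then have "(a,b) \<in> \<sigma>" using p cd cong_trans[OF assms(1)] cong_sym[OF assms(1)] by blast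
        then show False using z ab by simp
      qed
    qed
    ultimately show "\<exists>T. open T \<and> z \<in> T \<and> T \<subseteq> -\<sigma>" by blast
  qed
  then show ?thesis by (simp add: closed_open)
qed

lemma cong_reps: assumes P: "profinite_semigroup TYPE('a::{semigroup_mult,topological_space})"
  and "semigroup_congruence (\<sigma>::('a\<times>'a) set)" "open \<sigma>"
  shows "\<exists>R. finite R \<and> (\<forall>y. \<exists>r\<in>R. (r,y)\<in>\<sigma>)"
proof -
  have Do: "\<And>x. open {y. (x,y)\<in>\<sigma>}" using cls_open[OF assms(3)] .
  have cov: "UNIV \<subseteq> (\<Union>x\<in>UNIV. {y. (x,y)\<in>\<sigma>})" using cong_refl[OF assms(2)] by blast
  obtain R where "finite R" "UNIV \<subseteq> (\<Union>x\<in>R. {y. (x,y)\<in>\<sigma>})"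
  proof (rule compactE_image[OF prof_compact[OF P], of UNIV "\<lambda>x. {y. (x,y)\<in>\<sigma>}", OF Do cov])
    fix C' assume "C' \<subseteq> UNIV" "finite C'" "UNIV \<subseteq> (\<Union>x\<in>C'. {y. (x,y)\<in>\<sigma>})"
    then show thesis using that by blast
  qed
  then show ?thesis by blast
qed

lemma fs_sep: assumes P: "profinite_semigroup TYPE('a::{semigroup_mult,topological_space})"
  and FS2: "\<forall>\<rho>. semigroup_congruence \<rho> \<and> open \<rho> \<longrightarrow> (\<exists>\<sigma>\<in>\<C>. \<sigma> \<subseteq> \<rho>)"
  and F: "closed (F::'a set)" "open U" "F \<subseteq> U"
  shows "\<exists>\<sigma>\<in>\<C>. \<forall>a\<in>F. \<forall>b. (a,b)\<in>\<sigma> \<longrightarrow> b\<in>U"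
proof -
  let ?W = "U \<times> U \<union> (-F) \<times> (-F)"
  have "open ?W" using F by (intro open_Un open_Times) auto
  moreover have "\<And>x. (x,x) \<in> ?W" using F(3) by auto
  ultimately obtain \<rho> where "semigroup_congruence \<rho>" "open \<rho>" "\<rho> \<subseteq> ?W"
    using fundamental_cong[OF P] by metis
  then obtain \<sigma> where "\<sigma> \<in> \<C>" "\<sigma> \<subseteq> ?W" using FS2 by blast
  then show ?thesis by blast
qed



lemma fs_co_pw: assumes P: "profinite_semigroup TYPE('a::{semigroup_mult,topological_space})"
  and FS1: "\<forall>\<sigma>\<in>\<C>. semigroup_congruence \<sigma> \<and> open \<sigma> \<and> invariant_under E \<sigma>"
  and FS2: "\<forall>\<rho>. semigroup_congruence \<rho> \<and> open \<rho> \<longrightarrow> (\<exists>\<sigma>\<in>\<C>. \<sigma> \<subseteq> \<rho>)"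
  and Ec: "\<forall>f\<in>E. continuous_on UNIV (f::'a\<Rightarrow>'a)"
  and K: "compact K" "open U" "f \<in> E" "f`K \<subseteq> U"
  shows "\<exists>N. openin (pointwise_topology E) N \<and> f \<in> N \<and> N \<subseteq> {g\<in>E. g`K\<subseteq>U}"
proof -
  have "continuous_on K f" using Ec K(3) continuous_on_subset by blast
  then have "compact (f`K)" using K(1) by (rule compact_continuous_image)
  then have "closed (f`K)" by (rule prof_closed[OF P])
  then obtain \<sigma> where s: "\<sigma> \<in> \<C>" "\<forall>a\<in>f`K. \<forall>b. (a,b)\<in>\<sigma> \<longrightarrow> b\<in>U"
    using fs_sep[OF P FS2 _ K(2) K(4)] by blast
  have sc: "semigroup_congruence \<sigma>" and so: "open \<sigma>" and si: "invariant_under E \<sigma>"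
    using FS1 s(1) by auto
  have Do: "\<And>x. open {y. (x,y)\<in>\<sigma>}" using cls_open[OF so] .
  have cov: "K \<subseteq> (\<Union>x\<in>K. {y. (x,y)\<in>\<sigma>})" using cong_refl[OF sc] by blast
  obtain R where R: "R \<subseteq> K" "finite R" "K \<subseteq> (\<Union>x\<in>R. {y. (x,y)\<in>\<sigma>})"
  proof (rule compactE_image[OF K(1), of K "\<lambda>x. {y. (x,y)\<in>\<sigma>}", OF Do cov])
    fix C' assume "C' \<subseteq> K" "finite C'" "K \<subseteq> (\<Union>x\<in>C'. {y. (x,y)\<in>\<sigma>})"
    then show thesis using that by blast
  qed
  let ?T = "\<Inter>r\<in>R. {g::'a\<Rightarrow>'a. g r \<in> {y. (f r, y)\<in>\<sigma>}}"
  have "open ?T" using R(2) fun_open_eval[OF Do] by (intro open_INT) auto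
  then have N: "openin (pointwise_topology E) (?T \<inter> E)"
    unfolding pw_eq openin_subtopology by auto
  moreover have "f \<in> ?T \<inter> E" using K(3) cong_refl[OF sc] by auto
  moreover have "?T \<inter> E \<subseteq> {g\<in>E. g`K\<subseteq>U}"
  proof (intro subsetI)
    fix g assume g: "g \<in> ?T \<inter> E"
    have "g k \<in> U" if k: "k \<in> K" for k
    proof -
      obtain r where r: "r \<in> R" "(r,k) \<in> \<sigma>" using R(3) k by blast
      have "(g r, g k) \<in> \<sigma>" using si g r(2) unfolding invariant_under_def by blast
      moreover have "(f r, g r) \<in> \<sigma>" using g r(1) by blast
      ultimately have "(f r, g k) \<in> \<sigma>" using cong_trans[OF sc] by blast
      moreover have "f r \<in> f`K" using r(1) R(1) by blast
      ultimately show ?thesis using s(2) by blast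
    qed
    then show "g \<in> {g\<in>E. g`K\<subseteq>U}" using g by blast
  qed
  ultimately show ?thesis by blast
qed

lemma fs_compact: assumes P: "profinite_semigroup TYPE('a::{semigroup_mult,topological_space})"
  and FS1: "\<forall>\<sigma>\<in>\<C>. semigroup_congruence \<sigma> \<and> open \<sigma> \<and> invariant_under E \<sigma>"
  and FS2: "\<forall>\<rho>. semigroup_congruence \<rho> \<and> open \<rho> \<longrightarrow> (\<exists>\<sigma>\<in>\<C>. \<sigma> \<subseteq> \<rho>)"
  and Ec: "\<forall>f\<in>E. continuous_on UNIV (f::'a\<Rightarrow>'a)"
  and cl: "closed E"
  shows "compact_space (compact_open_topology E)"
proof -
  have "compact E" using compact_Int_closed[OF fun_compact[OF P] cl] by simp
  then have c1: "compactin (pointwise_topology E) E"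
    unfolding pw_eq by (simp add: compactin_subtopology)
  have "continuous_map (pointwise_topology E) (compact_open_topology E) id"
    unfolding continuous_map_def
  proof (intro conjI allI impI)
    show "id \<in> topspace (pointwise_topology E) \<rightarrow> topspace (compact_open_topology E)"
      by (simp add: pw_topspace co_topspace)
    fix V assume V: "openin (compact_open_topology E) V"
    then have "V \<subseteq> E" using openin_subset co_topspace by metis
    then have "{x \<in> topspace (pointwise_topology E). id x \<in> V} = V" by (auto simp: pw_topspace)
    moreover have "openin (pointwise_topology E) V"
      by (rule co_imp_pw[OF _ V]) (rule fs_co_pw[OF P FS1 FS2 Ec])
    ultimately show "openin (pointwise_topology E) {x \<in> topspace (pointwise_topology E). id x \<in> V}"
      by simp
  qed
  from image_compactin[OF c1 this] show ?thesis
    unfolding compact_space_def co_topspace by simp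
qed



lemma closed_eq_fun: assumes P: "profinite_semigroup TYPE('a::{semigroup_mult,topological_space})"
  and c: "continuous_on UNIV (\<phi>::'b::topological_space \<Rightarrow> 'a)" "continuous_on UNIV \<psi>"
  shows "closed {g. \<phi> g = \<psi> g}"
proof -
  have "open (-{g. \<phi> g = \<psi> g})"
  proof (subst open_subopen, intro ballI)
    fix g assume "g \<in> -{g. \<phi> g = \<psi> g}"
    then have "\<phi> g \<noteq> \<psi> g" by simp
    from prof_T2[OF P this] obtain U V where UV: "open U" "open V" "\<phi> g \<in> U" "\<psi> g \<in> V" "U \<inter> V = {}"
      by auto
    let ?T = "\<phi> -` U \<inter> \<psi> -` V"
    have "open ?T" using open_vimage[OF UV(1) c(1)] open_vimage[OF UV(2) c(2)] by (rule open_Int)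
    moreover have "g \<in> ?T" using UV by simp
    moreover have "?T \<subseteq> -{g. \<phi> g = \<psi> g}" using UV by auto
    ultimately show "\<exists>T. open T \<and> g \<in> T \<and> T \<subseteq> -{g. \<phi> g = \<psi> g}" by blast
  qed
  then show ?thesis by (simp add: closed_open)
qed

lemma cont_ev: "continuous_on UNIV (\<lambda>g::'b\<Rightarrow>'c::topological_space. g x)"
  by simp

lemma cont_ev2: "continuous_on UNIV (\<lambda>g::'b\<Rightarrow>'c::topological_space. (g x, g y))"
  by (intro continuous_on_Pair cont_ev)

lemma closed_hom: assumes P: "profinite_semigroup TYPE('a::{semigroup_mult,topological_space})"
  shows "closed {g::'a\<Rightarrow>'a. \<forall>x y. g (x*y) = g x * g y}"
proof -
  have "{g::'a\<Rightarrow>'a. \<forall>x y. g (x*y) = g x * g y} = (\<Inter>p\<in>UNIV. {g. g (fst p * snd p) = g (fst p) * g (snd p)})"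
    by auto
  moreover have "closed {g::'a\<Rightarrow>'a. g (fst p * snd p) = g (fst p) * g (snd p)}" for p :: "'a\<times>'a"
    by (rule closed_eq_fun[OF P cont_ev cont_mult[OF P cont_ev cont_ev]])
  ultimately show ?thesis by (simp add: closed_INT)
qed

lemma closed_pres: assumes "semigroup_congruence (\<sigma>::('a::{semigroup_mult,topological_space}\<times>'a) set)" "open \<sigma>"
  shows "closed {g::'a\<Rightarrow>'a. \<forall>x y. (x,y)\<in>\<sigma> \<longrightarrow> (g x, g y)\<in>\<sigma>}"
proof -
  have "{g::'a\<Rightarrow>'a. \<forall>x y. (x,y)\<in>\<sigma> \<longrightarrow> (g x, g y)\<in>\<sigma>} = (\<Inter>p\<in>\<sigma>. (\<lambda>g. (g (fst p), g (snd p))) -` \<sigma>)"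
    by auto
  moreover have "closed ((\<lambda>g::'a\<Rightarrow>'a. (g (fst p), g (snd p))) -` \<sigma>)" for p :: "'a\<times>'a"
    by (rule closed_vimage[OF cong_closed[OF assms] cont_ev2])
  ultimately show ?thesis by (simp add: closed_INT)
qed

lemma closed_refl: assumes "open (\<sigma>::('a::{semigroup_mult,topological_space}\<times>'a) set)"
  shows "closed {g::'a\<Rightarrow>'a. \<forall>x y. (g x, g y)\<in>\<sigma> \<longrightarrow> (x,y)\<in>\<sigma>}"
proof -
  have "{g::'a\<Rightarrow>'a. \<forall>x y. (g x, g y)\<in>\<sigma> \<longrightarrow> (x,y)\<in>\<sigma>} = (\<Inter>p\<in>-\<sigma>. (\<lambda>g. (g (fst p), g (snd p))) -` (-\<sigma>))"
    by auto
  moreover have "closed ((\<lambda>g::'a\<Rightarrow>'a. (g (fst p), g (snd p))) -` (-\<sigma>))" for p :: "'a\<times>'a"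
    by (rule closed_vimage[OF _ cont_ev2]) (use assms in auto)
  ultimately show ?thesis by (simp add: closed_INT)
qed

lemma closed_surj: assumes "semigroup_congruence (\<sigma>::('a::{semigroup_mult,topological_space}\<times>'a) set)" "open \<sigma>"
  and "finite R"
  shows "closed {g::'a\<Rightarrow>'a. \<forall>r\<in>R. \<exists>r'\<in>R. (g r', r)\<in>\<sigma>}"
proof -
  have "{g::'a\<Rightarrow>'a. \<forall>r\<in>R. \<exists>r'\<in>R. (g r', r)\<in>\<sigma>} = (\<Inter>r\<in>R. \<Union>r'\<in>R. (\<lambda>g. (g r', r)) -` \<sigma>)"
    by auto
  moreover have "closed ((\<lambda>g::'a\<Rightarrow>'a. (g r', r)) -` \<sigma>)" for r r'
    by (rule closed_vimage[OF cong_closed[OF assms(1,2)]]) (intro continuous_on_Pair cont_ev continuous_on_const)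
  ultimately show ?thesis using assms(3) by (simp add: closed_INT closed_UN)
qed



lemma end_iff: "f \<in> cont_End \<longleftrightarrow> continuous_on UNIV f \<and> (\<forall>x y. f (x * y) = f x * f y)"
  unfolding cont_End_def by simp

lemma aut_end: "f \<in> cont_Aut \<Longrightarrow> f \<in> cont_End"
  unfolding cont_Aut_def by simp

lemma end_comp: "f \<in> cont_End \<Longrightarrow> g \<in> cont_End \<Longrightarrow> f \<circ> g \<in> cont_End"
proof -
  assume f: "f \<in> cont_End" and g: "g \<in> cont_End"
  have "continuous_on UNIV (f \<circ> g)"
  proof -
    have cg: "continuous_on UNIV g" and cf: "continuous_on UNIV f" using f g unfolding end_iff by auto
    have "continuous_on (g ` UNIV) f" using cf continuous_on_subset by blast
    from continuous_on_compose[OF cg this] show ?thesis .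
  qed
  moreover have "\<forall>x y. (f \<circ> g) (x * y) = (f \<circ> g) x * (f \<circ> g) y" using f g unfolding end_iff by simp
  ultimately show ?thesis unfolding end_iff by blast
qed

lemma end_id: "id \<in> cont_End"
  unfolding end_iff by simp

lemma aut_id: "id \<in> cont_Aut"
  unfolding cont_Aut_def using end_id by simp

lemma aut_comp: "f \<in> cont_Aut \<Longrightarrow> g \<in> cont_Aut \<Longrightarrow> f \<circ> g \<in> cont_Aut"
proof -
  assume f: "f \<in> cont_Aut" and g: "g \<in> cont_Aut"
  have "homeomorphic_map euclidean euclidean (f \<circ> g)"
    using homeomorphic_map_compose[of euclidean euclidean g euclidean f] f g unfolding cont_Aut_def by simp
  moreover have "f \<circ> g \<in> cont_End" using end_comp f g aut_end by blast
  ultimately show ?thesis unfolding cont_Aut_def by simp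
qed

lemma aut_inv: assumes "f \<in> cont_Aut"
  shows "inv f \<in> cont_Aut \<and> (\<forall>x. inv f (f x) = x) \<and> (\<forall>y. f (inv f y) = y)"
proof -
  have hf: "homeomorphic_map euclidean euclidean f" and ef: "f \<in> cont_End"
    using assms unfolding cont_Aut_def by auto
  obtain g where "homeomorphic_maps euclidean euclidean f g"
    using hf homeomorphic_map_maps by blast
  then have hg: "homeomorphic_map euclidean euclidean g" and gf: "\<And>x. g (f x) = x" and fg: "\<And>y. f (g y) = y"
    unfolding homeomorphic_maps_map by auto
  have "inj f" by (metis gf injI)
  then have ig: "inv f = g" by (intro ext) (metis fg inv_f_eq)
  have "g (x * y) = g x * g y" for x y
  proof -
    have "f (g x * g y) = x * y" using ef fg unfolding end_iff by simp
    then show ?thesis by (metis gf)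
  qed
  moreover have "continuous_on UNIV g" using hg homeomorphic_imp_continuous_map by fastforce
  ultimately have "g \<in> cont_Aut" unfolding cont_Aut_def end_iff using hg by simp
  then show ?thesis using ig gf fg by simp
qed

lemma fs_cont: assumes P: "profinite_semigroup TYPE('a::{semigroup_mult,topological_space})"
  and FS1: "\<forall>\<sigma>\<in>\<C>. semigroup_congruence \<sigma> \<and> open \<sigma>"
  and FS2: "\<forall>\<rho>. semigroup_congruence \<rho> \<and> open \<rho> \<longrightarrow> (\<exists>\<sigma>\<in>\<C>. \<sigma> \<subseteq> \<rho>)"
  and pres: "\<forall>\<sigma>\<in>\<C>. \<forall>x y. (x,y)\<in>\<sigma> \<longrightarrow> (g x, g y)\<in>\<sigma>"
  shows "continuous_on UNIV (g::'a\<Rightarrow>'a)"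
proof -
  have "open (g -` B)" if B: "open B" for B
  proof (subst open_subopen, intro ballI)
    fix x assume x: "x \<in> g -` B"
    have c: "closed {g x}" by (rule prof_closed_single[OF P])
    have sb: "{g x} \<subseteq> B" using x by simp
    from fs_sep[OF P FS2 c B sb] obtain \<sigma> where s: "\<sigma> \<in> \<C>" "\<forall>b. (g x, b)\<in>\<sigma> \<longrightarrow> b\<in>B"
      by auto
    have sc: "semigroup_congruence \<sigma>" "open \<sigma>" using FS1 s(1) by auto
    let ?T = "{y. (x,y)\<in>\<sigma>}"
    have "open ?T" by (rule cls_open[OF sc(2)])
    moreover have "x \<in> ?T" using cong_refl[OF sc(1)] by simp
    moreover have "?T \<subseteq> g -` B" using pres s by blast
    ultimately show "\<exists>T. open T \<and> x \<in> T \<and> T \<subseteq> g -` B" by blast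
  qed
  then show ?thesis by (simp add: continuous_on_open_vimage)
qed



lemma fs_end_compact: assumes P: "profinite_semigroup TYPE('a::{semigroup_mult,topological_space})"
  and FS: "has_fundamental_system_invariant (cont_End :: ('a \<Rightarrow> 'a) set)"
  shows "compact_space (compact_open_topology (cont_End :: ('a \<Rightarrow> 'a) set))"
proof -
  obtain \<C> where FS1: "\<forall>\<sigma>\<in>\<C>. semigroup_congruence \<sigma> \<and> open \<sigma> \<and> invariant_under (cont_End :: ('a \<Rightarrow> 'a) set) \<sigma>"
    and FS2: "\<forall>\<rho>. semigroup_congruence \<rho> \<and> open \<rho> \<longrightarrow> (\<exists>\<sigma>\<in>\<C>. \<sigma> \<subseteq> (\<rho>::('a\<times>'a) set))"
    using FS unfolding has_fundamental_system_invariant_def by blast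
  have FS1': "\<forall>\<sigma>\<in>\<C>. semigroup_congruence \<sigma> \<and> open \<sigma>" using FS1 by blast
  let ?H = "{g::'a\<Rightarrow>'a. \<forall>x y. g (x*y) = g x * g y}"
  let ?Q = "\<Inter>\<sigma>\<in>\<C>. {g::'a\<Rightarrow>'a. \<forall>x y. (x,y)\<in>\<sigma> \<longrightarrow> (g x, g y)\<in>\<sigma>}"
  have eq: "(cont_End :: ('a \<Rightarrow> 'a) set) = ?H \<inter> ?Q"
  proof
    show "cont_End \<subseteq> ?H \<inter> ?Q"
    proof
      fix f :: "'a \<Rightarrow> 'a" assume f: "f \<in> cont_End"
      then have "f \<in> ?H" unfolding end_iff by blast
      moreover have "f \<in> ?Q" using FS1 f unfolding invariant_under_def by blast
      ultimately show "f \<in> ?H \<inter> ?Q" by blast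
    qed
    show "?H \<inter> ?Q \<subseteq> cont_End"
    proof
      fix g :: "'a \<Rightarrow> 'a" assume g: "g \<in> ?H \<inter> ?Q"
      then have "\<forall>\<sigma>\<in>\<C>. \<forall>x y. (x,y)\<in>\<sigma> \<longrightarrow> (g x, g y)\<in>\<sigma>" by blast
      from fs_cont[OF P FS1' FS2 this] have "continuous_on UNIV g" .
      then show "g \<in> cont_End" using g unfolding end_iff by blast
    qed
  qed
  have "closed ?Q" using FS1 closed_pres by (intro closed_INT) blast
  then have cl: "closed (?H \<inter> ?Q)" using closed_hom[OF P] by (rule closed_Int[rotated])
  have Ec: "\<forall>f\<in>cont_End. continuous_on UNIV (f::'a\<Rightarrow>'a)" using end_iff by blast
  show ?thesis
    by (rule fs_compact[OF P FS1 FS2 Ec]) (subst eq, rule cl)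
qed

lemma fs_aut_compact: assumes P: "profinite_semigroup TYPE('a::{semigroup_mult,topological_space})"
  and FS: "has_fundamental_system_invariant (cont_Aut :: ('a \<Rightarrow> 'a) set)"
  shows "compact_space (compact_open_topology (cont_Aut :: ('a \<Rightarrow> 'a) set))"
proof -
  obtain \<C> where FS1: "\<forall>\<sigma>\<in>\<C>. semigroup_congruence \<sigma> \<and> open \<sigma> \<and> invariant_under (cont_Aut :: ('a \<Rightarrow> 'a) set) \<sigma>"
    and FS2: "\<forall>\<rho>. semigroup_congruence \<rho> \<and> open \<rho> \<longrightarrow> (\<exists>\<sigma>\<in>\<C>. \<sigma> \<subseteq> (\<rho>::('a\<times>'a) set))"
    using FS unfolding has_fundamental_system_invariant_def by blast
  have FS1': "\<forall>\<sigma>\<in>\<C>. semigroup_congruence \<sigma> \<and> open \<sigma>" using FS1 by blast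
  have "\<forall>\<sigma>\<in>\<C>. \<exists>R. finite R \<and> (\<forall>y. \<exists>r\<in>R. (r,y)\<in>\<sigma>)"
  proof
    fix \<sigma> assume "\<sigma> \<in> \<C>"
    then have "semigroup_congruence \<sigma>" "open \<sigma>" using FS1' by auto
    from cong_reps[OF P this] show "\<exists>R. finite R \<and> (\<forall>y. \<exists>r\<in>R. (r,y)\<in>\<sigma>)" .
  qed
  from bchoice[OF this] obtain Rf where Rf: "\<forall>\<sigma>\<in>\<C>. finite (Rf \<sigma>) \<and> (\<forall>y. \<exists>r\<in>Rf \<sigma>. (r,y)\<in>\<sigma>)"
    by blast
  let ?H = "{g::'a\<Rightarrow>'a. \<forall>x y. g (x*y) = g x * g y}"
  let ?Q = "\<Inter>\<sigma>\<in>\<C>. {g::'a\<Rightarrow>'a. \<forall>x y. (x,y)\<in>\<sigma> \<longrightarrow> (g x, g y)\<in>\<sigma>}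
     \<inter> {g::'a\<Rightarrow>'a. \<forall>x y. (g x, g y)\<in>\<sigma> \<longrightarrow> (x,y)\<in>\<sigma>}
     \<inter> {g::'a\<Rightarrow>'a. \<forall>r\<in>Rf \<sigma>. \<exists>r'\<in>Rf \<sigma>. (g r', r)\<in>\<sigma>}"
  have eq: "(cont_Aut :: ('a \<Rightarrow> 'a) set) = ?H \<inter> ?Q"
  proof
    show "cont_Aut \<subseteq> ?H \<inter> ?Q"
    proof
      fix f :: "'a \<Rightarrow> 'a" assume f: "f \<in> cont_Aut"
      then have "f \<in> ?H" using aut_end unfolding end_iff by blast
      moreover have "f \<in> ?Q"
      proof -
        have fi: "inv f \<in> cont_Aut" "\<And>x. inv f (f x) = x" "\<And>y. f (inv f y) = y" using aut_inv[OF f] by auto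
        have "f \<in> {g::'a\<Rightarrow>'a. \<forall>x y. (x,y)\<in>\<sigma> \<longrightarrow> (g x, g y)\<in>\<sigma>}
            \<inter> {g::'a\<Rightarrow>'a. \<forall>x y. (g x, g y)\<in>\<sigma> \<longrightarrow> (x,y)\<in>\<sigma>}
            \<inter> {g::'a\<Rightarrow>'a. \<forall>r\<in>Rf \<sigma>. \<exists>r'\<in>Rf \<sigma>. (g r', r)\<in>\<sigma>}" if s: "\<sigma> \<in> \<C>" for \<sigma>
        proof -
          have inv: "\<And>h x y. h \<in> cont_Aut \<Longrightarrow> (x,y)\<in>\<sigma> \<Longrightarrow> (h x, h y)\<in>\<sigma>"
            using FS1 s unfolding invariant_under_def by blast
          have a: "\<forall>x y. (x,y)\<in>\<sigma> \<longrightarrow> (f x, f y)\<in>\<sigma>" using inv[OF f] by blast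
          have b: "\<forall>x y. (f x, f y)\<in>\<sigma> \<longrightarrow> (x,y)\<in>\<sigma>" using inv[OF fi(1)] fi(2) by metis
          have sc: "semigroup_congruence \<sigma>" using FS1 s by blast
          have c: "\<forall>r\<in>Rf \<sigma>. \<exists>r'\<in>Rf \<sigma>. (f r', r)\<in>\<sigma>"
          proof
            fix r assume "r \<in> Rf \<sigma>"
            obtain r' where r': "r' \<in> Rf \<sigma>" "(r', inv f r) \<in> \<sigma>" using Rf s by blast
            then have "(f r', f (inv f r)) \<in> \<sigma>" using a by blast
            then have "(f r', r) \<in> \<sigma>" using fi(3) by simp
            then show "\<exists>r'\<in>Rf \<sigma>. (f r', r)\<in>\<sigma>" using r'(1) by blast
          qed
          show ?thesis unfolding Int_iff mem_Collect_eq using a b c by (intro conjI)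
        qed
        then show ?thesis by (rule INT_I)
      qed
      ultimately show "f \<in> ?H \<inter> ?Q" by (rule IntI)
    qed
    show "?H \<inter> ?Q \<subseteq> cont_Aut"
    proof
      fix g :: "'a \<Rightarrow> 'a" assume g: "g \<in> ?H \<inter> ?Q"
      have g2: "g \<in> ?Q" using g by (rule IntD2)
      have gs: "(\<forall>x y. (x,y)\<in>\<sigma> \<longrightarrow> (g x, g y)\<in>\<sigma>) \<and> (\<forall>x y. (g x, g y)\<in>\<sigma> \<longrightarrow> (x,y)\<in>\<sigma>)
          \<and> (\<forall>r\<in>Rf \<sigma>. \<exists>r'\<in>Rf \<sigma>. (g r', r)\<in>\<sigma>)" if s: "\<sigma> \<in> \<C>" for \<sigma>
      proof -
        have "g \<in> {g::'a\<Rightarrow>'a. \<forall>x y. (x,y)\<in>\<sigma> \<longrightarrow> (g x, g y)\<in>\<sigma>}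
          \<inter> {g::'a\<Rightarrow>'a. \<forall>x y. (g x, g y)\<in>\<sigma> \<longrightarrow> (x,y)\<in>\<sigma>}
          \<inter> {g::'a\<Rightarrow>'a. \<forall>r\<in>Rf \<sigma>. \<exists>r'\<in>Rf \<sigma>. (g r', r)\<in>\<sigma>}"
          using g2 s by (rule INT_D)
        then show ?thesis unfolding Int_iff mem_Collect_eq conj_assoc .
      qed
      have pres: "\<forall>\<sigma>\<in>\<C>. \<forall>x y. (x,y)\<in>\<sigma> \<longrightarrow> (g x, g y)\<in>\<sigma>"
      proof
        fix \<sigma> assume s: "\<sigma> \<in> \<C>"
        show "\<forall>x y. (x,y)\<in>\<sigma> \<longrightarrow> (g x, g y)\<in>\<sigma>" using gs[OF s] by (elim conjE)
      qed
      have refl: "\<forall>\<sigma>\<in>\<C>. \<forall>x y. (g x, g y)\<in>\<sigma> \<longrightarrow> (x,y)\<in>\<sigma>"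
      proof
        fix \<sigma> assume s: "\<sigma> \<in> \<C>"
        show "\<forall>x y. (g x, g y)\<in>\<sigma> \<longrightarrow> (x,y)\<in>\<sigma>" using gs[OF s] by (elim conjE)
      qed
      have surj: "\<forall>\<sigma>\<in>\<C>. \<forall>r\<in>Rf \<sigma>. \<exists>r'\<in>Rf \<sigma>. (g r', r)\<in>\<sigma>"
      proof
        fix \<sigma> assume s: "\<sigma> \<in> \<C>"
        show "\<forall>r\<in>Rf \<sigma>. \<exists>r'\<in>Rf \<sigma>. (g r', r)\<in>\<sigma>" using gs[OF s] by (elim conjE)
      qed
      have hom: "\<forall>x y. g (x*y) = g x * g y" using IntD1[OF g] by simp
      from fs_cont[OF P FS1' FS2 pres] have cg: "continuous_on UNIV g" .
      have inj: "inj g"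
      proof (rule injI, rule ccontr)
        fix x y assume gxy: "g x = g y" and ne: "x \<noteq> y"
        have c: "closed {x}" by (rule prof_closed_single[OF P])
        have o: "open (-{y})" using prof_closed_single[OF P] by (simp add: open_Compl)
        have sb: "{x} \<subseteq> -{y}" using ne by simp
        from fs_sep[OF P FS2 c o sb] obtain \<sigma> where s: "\<sigma> \<in> \<C>" "\<forall>b. (x, b)\<in>\<sigma> \<longrightarrow> b \<in> -{y}"
          by auto
        have "(g x, g y) \<in> \<sigma>" using gxy cong_refl FS1 s(1) by metis
        then have "(x,y) \<in> \<sigma>" using refl s(1) by blast
        then show False using s(2) by blast
      qed
      have sur: "range g = UNIV"
      proof (rule ccontr)
        assume "range g \<noteq> UNIV"
        then obtain y where y: "y \<notin> range g" by blast
        have "compact (range g)" using compact_continuous_image[OF cg prof_compact[OF P]] .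
        then have c: "closed (range g)" by (rule prof_closed[OF P])
        have o: "open (-{y})" using prof_closed_single[OF P] by (simp add: open_Compl)
        have sb: "range g \<subseteq> -{y}" using y by blast
        from fs_sep[OF P FS2 c o sb] obtain \<sigma> where s: "\<sigma> \<in> \<C>" "\<forall>a\<in>range g. \<forall>b. (a, b)\<in>\<sigma> \<longrightarrow> b \<in> -{y}"
          by auto
        have sc: "semigroup_congruence \<sigma>" using FS1 s(1) by blast
        obtain r where r: "r \<in> Rf \<sigma>" "(r,y) \<in> \<sigma>" using Rf s(1) by blast
        obtain r' where r': "r' \<in> Rf \<sigma>" "(g r', r) \<in> \<sigma>" using surj s(1) r(1) by blast
        have "(g r', y) \<in> \<sigma>" using cong_trans[OF sc r'(2) r(2)] .
        then show False using s(2) by blast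
      qed
      have "homeomorphic_map euclidean euclidean g"
        by (rule continuous_imp_homeomorphic_map)
          (use cg P inj sur in \<open>simp_all add: profinite_semigroup_def\<close>)
      then show "g \<in> cont_Aut" unfolding cont_Aut_def end_iff using cg hom by blast
    qed
  qed
  have "closed ?Q"
  proof (rule closed_INT, intro ballI)
    fix \<sigma> assume s: "\<sigma> \<in> \<C>"
    then have sc: "semigroup_congruence \<sigma>" "open \<sigma>" using FS1 by auto
    have "finite (Rf \<sigma>)" using Rf s by blast
    then show "closed ({g::'a\<Rightarrow>'a. \<forall>x y. (x,y)\<in>\<sigma> \<longrightarrow> (g x, g y)\<in>\<sigma>}
     \<inter> {g::'a\<Rightarrow>'a. \<forall>x y. (g x, g y)\<in>\<sigma> \<longrightarrow> (x,y)\<in>\<sigma>}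
     \<inter> {g::'a\<Rightarrow>'a. \<forall>r\<in>Rf \<sigma>. \<exists>r'\<in>Rf \<sigma>. (g r', r)\<in>\<sigma>})"
      using closed_pres[OF sc] closed_refl[OF sc(2)] closed_surj[OF sc] by (intro closed_Int)
  qed
  then have cl: "closed (?H \<inter> ?Q)" using closed_hom[OF P] by (rule closed_Int[rotated])
  have Ec: "\<forall>f\<in>cont_Aut. continuous_on UNIV (f::'a\<Rightarrow>'a)" using aut_end end_iff by blast
  show ?thesis
    by (rule fs_compact[OF P FS1 FS2 Ec]) (subst eq, rule cl)
qed



lemma eval_cont: assumes P: "profinite_semigroup TYPE('a::{semigroup_mult,topological_space})"
  and Ec: "\<forall>f\<in>E. continuous_on UNIV (f::'a\<Rightarrow>'a)"
  shows "continuous_map (prod_topology (compact_open_topology E) euclidean) euclidean (\<lambda>p. fst p (snd p))"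
  unfolding continuous_map_def
proof (intro conjI allI impI)
  show "(\<lambda>p. fst p (snd p)) \<in> topspace (prod_topology (compact_open_topology E) euclidean) \<rightarrow> topspace euclidean"
    by simp
  fix U :: "'a set" assume "openin euclidean U"
  then have U: "open U" by simp
  show "openin (prod_topology (compact_open_topology E) euclidean)
          {p \<in> topspace (prod_topology (compact_open_topology E) euclidean). fst p (snd p) \<in> U}"
  proof (subst openin_subopen, intro ballI)
    fix p assume p: "p \<in> {p \<in> topspace (prod_topology (compact_open_topology E) euclidean). fst p (snd p) \<in> U}"
    obtain f x where fx: "p = (f,x)" by (cases p)
    have f: "f \<in> E" "f x \<in> U" using p fx by (auto simp: co_topspace)
    have "open (f -` U)" using Ec f(1) U continuous_on_open_vimage[of UNIV f] by auto
    moreover have "x \<in> f -` U" using f by simp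
    ultimately obtain D where D: "open D" "closed D" "x \<in> D" "D \<subseteq> f -` U"
      using clopen_nbhd[OF P] by metis
    let ?N = "{g\<in>E. g`D\<subseteq>U}"
    have "openin (compact_open_topology E) ?N" by (rule co_basis[OF prof_cpt[OF P D(2)] U])
    then have "openin (prod_topology (compact_open_topology E) euclidean) (?N \<times> D)"
      using D(1) by (simp add: openin_prod_Times_iff)
    moreover have "p \<in> ?N \<times> D" using fx f D by auto
    moreover have "?N \<times> D \<subseteq> {p \<in> topspace (prod_topology (compact_open_topology E) euclidean). fst p (snd p) \<in> U}"
      by (auto simp: co_topspace)
    ultimately show "\<exists>T. openin (prod_topology (compact_open_topology E) euclidean) T \<and> p \<in> T \<and>
       T \<subseteq> {p \<in> topspace (prod_topology (compact_open_topology E) euclidean). fst p (snd p) \<in> U}"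
      by blast
  qed
qed



lemma eval2_cont: assumes P: "profinite_semigroup TYPE('a::{semigroup_mult,topological_space})"
  and Ec: "\<forall>f\<in>E. continuous_on UNIV (f::'a\<Rightarrow>'a)"
  shows "continuous_map (prod_topology (compact_open_topology E) euclidean) euclidean
     (\<lambda>p. (fst p (fst (snd p)), fst p (snd (snd p))))"
proof -
  let ?X = "prod_topology (compact_open_topology E) (euclidean :: ('a\<times>'a) topology)"
  have ev: "continuous_map (prod_topology (compact_open_topology E) euclidean) euclidean (\<lambda>p::('a\<Rightarrow>'a)\<times>'a. fst p (snd p))"
    by (rule eval_cont[OF P Ec])
  have cf: "continuous_map (euclidean :: ('a\<times>'a) topology) euclidean fst" by (simp add: continuous_on_fst[OF continuous_on_id])
  have cs: "continuous_map (euclidean :: ('a\<times>'a) topology) euclidean snd" by (simp add: continuous_on_snd[OF continuous_on_id])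
  have f1: "continuous_map ?X (compact_open_topology E) fst" by (rule continuous_map_fst)
  have f2: "continuous_map ?X euclidean (\<lambda>p. fst (snd p))"
    using continuous_map_compose[OF continuous_map_snd cf] unfolding o_def .
  have f3: "continuous_map ?X euclidean (\<lambda>p. snd (snd p))"
    using continuous_map_compose[OF continuous_map_snd cs] unfolding o_def .
  have m1: "continuous_map ?X (prod_topology (compact_open_topology E) euclidean) (\<lambda>p. (fst p, fst (snd p)))"
    unfolding continuous_map_pairwise o_def using f1 f2 by simp
  have m2: "continuous_map ?X (prod_topology (compact_open_topology E) euclidean) (\<lambda>p. (fst p, snd (snd p)))"
    unfolding continuous_map_pairwise o_def using f1 f3 by simp
  have a: "continuous_map ?X euclidean (\<lambda>p. fst p (fst (snd p)))"
    using continuous_map_compose[OF m1 ev] by (simp add: o_def)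
  have b: "continuous_map ?X euclidean (\<lambda>p. fst p (snd (snd p)))"
    using continuous_map_compose[OF m2 ev] by (simp add: o_def)
  have "continuous_map ?X (prod_topology euclidean euclidean) (\<lambda>p. (fst p (fst (snd p)), fst p (snd (snd p))))"
    unfolding continuous_map_pairwise using a b by (simp add: o_def)
  then show ?thesis by simp
qed

lemma compact_imp_fs: assumes P: "profinite_semigroup TYPE('a::{semigroup_mult,topological_space})"
  and EE: "E \<subseteq> (cont_End :: ('a\<Rightarrow>'a) set)" and Eid: "id \<in> E"
  and Ecomp: "\<And>f g. f \<in> E \<Longrightarrow> g \<in> E \<Longrightarrow> f \<circ> g \<in> E"
  and cpt: "compact_space (compact_open_topology E)"
  shows "has_fundamental_system_invariant E"
proof -
  have Ec: "\<forall>f\<in>E. continuous_on UNIV (f::'a\<Rightarrow>'a)" using EE end_iff by blast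
  have Eh: "\<And>f x y. f \<in> E \<Longrightarrow> f (x * y) = f x * f y" using EE end_iff by blast
  define S where "S \<rho> = {(x,y). \<forall>f\<in>E. (f x, f y)\<in>\<rho>}" for \<rho> :: "('a\<times>'a) set"
  define \<C> where "\<C> = {S \<rho> | \<rho>. semigroup_congruence \<rho> \<and> open \<rho>}"
  have Smem: "(x,y) \<in> S \<rho> \<longleftrightarrow> (\<forall>f\<in>E. (f x, f y)\<in>\<rho>)" for x y \<rho> unfolding S_def by simp
  have cong: "semigroup_congruence (S \<rho>)" if r: "semigroup_congruence \<rho>" for \<rho>
  proof -
    have "refl_on UNIV (S \<rho>)" unfolding refl_on_def using cong_refl[OF r] Smem by auto
    moreover have "sym (S \<rho>)" unfolding sym_def using cong_sym[OF r] Smem by blast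
    moreover have "trans (S \<rho>)" unfolding trans_def using cong_trans[OF r] Smem by blast
    ultimately have "equiv UNIV (S \<rho>)" unfolding equiv_def by simp
    moreover have "(z * x, z * y) \<in> S \<rho> \<and> (x * z, y * z) \<in> S \<rho>" if "(x,y) \<in> S \<rho>" for x y z
    proof -
      have h: "\<And>f. f\<in>E \<Longrightarrow> (f x, f y) \<in> \<rho>" using that Smem by blast
      have "(f (z*x), f (z*y)) \<in> \<rho> \<and> (f (x*z), f (y*z)) \<in> \<rho>" if f: "f \<in> E" for f
        using r h[OF f] Eh[OF f] unfolding semigroup_congruence_def by simp
      then show ?thesis using Smem by blast
    qed
    ultimately show ?thesis unfolding semigroup_congruence_def by blast
  qed
  have inv: "invariant_under E (S \<rho>)" for \<rho>
    unfolding invariant_under_def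
  proof (intro ballI allI impI)
    fix f x y assume f: "f \<in> E" and xy: "(x,y) \<in> S \<rho>"
    have "(g (f x), g (f y)) \<in> \<rho>" if g: "g \<in> E" for g
      using xy Ecomp[OF g f] Smem by (metis comp_apply)
    then show "(f x, f y) \<in> S \<rho>" using Smem by blast
  qed
  have sub: "S \<rho> \<subseteq> \<rho>" for \<rho>
  proof
    fix z assume "z \<in> S \<rho>"
    then show "z \<in> \<rho>" using Eid Smem by (cases z) fastforce
  qed
  have op: "open (S \<rho>)" if r: "open \<rho>" for \<rho>
  proof -
    let ?X = "prod_topology (compact_open_topology E) (euclidean :: ('a\<times>'a) topology)"
    let ?A = "{p \<in> topspace ?X. (fst p (fst (snd p)), fst p (snd (snd p))) \<in> \<rho>}"
    have A: "openin ?X ?A"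
      by (rule openin_continuous_map_preimage[OF eval2_cont[OF P Ec]]) (use r in simp)
    have cE: "compactin (compact_open_topology E) E" using cpt unfolding compact_space_def co_topspace .
    show ?thesis
    proof (subst open_subopen, intro ballI)
      fix z assume z: "z \<in> S \<rho>"
      have "E \<times> {z} \<subseteq> ?A"
      proof
        fix p assume "p \<in> E \<times> {z}"
        then obtain f where "p = (f,z)" "f \<in> E" by blast
        then show "p \<in> ?A" using z Smem[of "fst z" "snd z" \<rho>] by (auto simp: co_topspace)
      qed
      from tube_lemma_left[OF A cE _ this]
      obtain U V where UV: "openin euclidean V" "z \<in> V" "U \<times> V \<subseteq> ?A" "E \<subseteq> U" by auto
      have "V \<subseteq> S \<rho>"
      proof
        fix y assume y: "y \<in> V"
        have "(f (fst y), f (snd y)) \<in> \<rho>" if f: "f \<in> E" for f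
        proof -
          have "(f,y) \<in> ?A" using UV(3,4) f y by blast
          then show ?thesis by simp
        qed
        then show "y \<in> S \<rho>" using Smem[of "fst y" "snd y"] by simp
      qed
      then show "\<exists>T. open T \<and> z \<in> T \<and> T \<subseteq> S \<rho>" using UV by auto
    qed
  qed
  have "\<forall>\<sigma>\<in>\<C>. semigroup_congruence \<sigma> \<and> open \<sigma> \<and> invariant_under E \<sigma>"
    unfolding \<C>_def using cong op inv by blast
  moreover have "\<forall>\<rho>. semigroup_congruence \<rho> \<and> open \<rho> \<longrightarrow> (\<exists>\<sigma>\<in>\<C>. \<sigma> \<subseteq> \<rho>)"
    unfolding \<C>_def using sub by blast
  ultimately show ?thesis unfolding has_fundamental_system_invariant_def by blast
qed



lemma co_eq_pw: assumes P: "profinite_semigroup TYPE('a::{semigroup_mult,topological_space})"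
  and cpt: "compact_space (compact_open_topology (E :: ('a\<Rightarrow>'a) set))"
  shows "compact_open_topology E = pointwise_topology E"
proof -
  have c: "continuous_map (compact_open_topology E) (pointwise_topology E) id" by (rule co_pw_cont)
  have cm: "closed_map (compact_open_topology E) (pointwise_topology E) id"
    by (rule continuous_imp_closed_map[OF c cpt pw_Haus[OF P]])
  show ?thesis unfolding topology_eq
  proof (intro allI iffI)
    fix S assume S: "openin (pointwise_topology E) S"
    then have "S \<subseteq> E" using openin_subset pw_topspace by metis
    then have "{x \<in> topspace (compact_open_topology E). id x \<in> S} = S" by (auto simp: co_topspace)
    then show "openin (compact_open_topology E) S"
      using openin_continuous_map_preimage[OF c S] by simp
  next
    fix S assume S: "openin (compact_open_topology E) S"
    then have "S \<subseteq> E" using openin_subset co_topspace by metis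
    have "closedin (compact_open_topology E) (E - S)"
      using S co_topspace by (metis closedin_diff closedin_topspace)
    then have "closedin (pointwise_topology E) (id ` (E - S))" using cm unfolding closed_map_def by blast
    then have "closedin (pointwise_topology E) (E - S)" by simp
    then have "openin (pointwise_topology E) (E - (E - S))" using pw_topspace by (metis openin_diff openin_topspace)
    then show "openin (pointwise_topology E) S" using \<open>S \<subseteq> E\<close> by (simp add: Diff_Diff_Int Int_absorb1)
  qed
qed

lemma pw_td: assumes P: "profinite_semigroup TYPE('a::{semigroup_mult,topological_space})"
  shows "totally_disconnected_space (pointwise_topology (E :: ('a\<Rightarrow>'a) set))"
  unfolding totally_disconnected_space_def
proof (intro ballI)
  fix f assume f: "f \<in> topspace (pointwise_topology E)"
  let ?X = "pointwise_topology E"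
  have "connected_component_of_set ?X f \<subseteq> {f}"
  proof
    fix g assume g: "g \<in> connected_component_of_set ?X f"
    show "g \<in> {f}"
    proof (rule ccontr)
      assume "g \<notin> {f}"
      then have "g \<noteq> f" by simp
      then obtain x where x: "g x \<noteq> f x" by (meson ext)
      have o: "open (-{g x})" using prof_closed_single[OF P] by (simp add: open_Compl)
      have "f x \<in> -{g x}" using x by simp
      from clopen_nbhd[OF P o this] obtain D where D: "open D" "closed D" "f x \<in> D" "D \<subseteq> -{g x}" by auto
      let ?T = "{h::'a\<Rightarrow>'a. h x \<in> D} \<inter> E"
      have Top: "openin ?X ?T" unfolding pw_eq openin_subtopology
        by (rule exI[of _ "{h::'a\<Rightarrow>'a. h x \<in> D}"]) (simp add: fun_open_eval[OF D(1)])
      have Tcl: "closedin ?X ?T" unfolding pw_eq closedin_subtopology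
        by (rule exI[of _ "{h::'a\<Rightarrow>'a. h x \<in> D}"]) (simp add: fun_closed_eval[OF D(2)])
      have "connected_component_of_set ?X f \<subseteq> ?T \<or> disjnt (connected_component_of_set ?X f) ?T"
        by (rule connectedin_clopen_cases[OF connectedin_connected_component_of Tcl Top])
      moreover have "f \<in> connected_component_of_set ?X f" using f connected_component_of_refl[of ?X f] by simp
      moreover have "f \<in> ?T" using f D(3) pw_topspace by auto
      ultimately have "g \<in> ?T" using g by (auto simp: disjnt_def)
      then show False using D(4) by auto
    qed
  qed
  moreover have "f \<in> connected_component_of_set ?X f" using f connected_component_of_refl[of ?X f] by simp
  ultimately show "connected_component_of_set ?X f = {f}" by blast
qed

lemma comp_cont: assumes P: "profinite_semigroup TYPE('a::{semigroup_mult,topological_space})"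
  and Ec: "\<forall>f\<in>E. continuous_on UNIV (f::'a\<Rightarrow>'a)"
  and Ecomp: "\<And>f g. f \<in> E \<Longrightarrow> g \<in> E \<Longrightarrow> f \<circ> g \<in> E"
  and cpt: "compact_space (compact_open_topology E)"
  shows "continuous_map (prod_topology (compact_open_topology E) (compact_open_topology E)) (compact_open_topology E) (\<lambda>(f,g). f \<circ> g)"
proof -
  let ?T = "compact_open_topology E"
  let ?X = "prod_topology ?T ?T"
  have "continuous_map ?X euclidean (\<lambda>p. fst p (snd p x))" for x
  proof -
    have f1: "continuous_map ?X ?T fst" by (rule continuous_map_fst)
    have f2: "continuous_map ?X euclidean (\<lambda>p. snd p x)"
      using continuous_map_compose[OF continuous_map_snd co_eval_cont[of E x]] unfolding o_def .
    have m: "continuous_map ?X (prod_topology ?T euclidean) (\<lambda>p. (fst p, snd p x))"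
      unfolding continuous_map_pairwise o_def using f1 f2 by simp
    show ?thesis using continuous_map_compose[OF m eval_cont[OF P Ec]] unfolding o_def by simp
  qed
  then have "continuous_map ?X (product_topology (\<lambda>_. euclidean) UNIV) (\<lambda>(f,g). f \<circ> g)"
    unfolding continuous_map_componentwise_UNIV by (simp add: case_prod_unfold)
  moreover have "(\<lambda>(f,g). f \<circ> g) \<in> topspace ?X \<rightarrow> E" using Ecomp by (auto simp: co_topspace)
  ultimately have "continuous_map ?X (pointwise_topology E) (\<lambda>(f,g). f \<circ> g)"
    unfolding pointwise_topology_def by (rule continuous_map_into_subtopology)
  then show ?thesis using co_eq_pw[OF P cpt] by simp
qed



lemma inv_cont: assumes P: "profinite_semigroup TYPE('a::{semigroup_mult,topological_space})"
  and cpt: "compact_space (compact_open_topology (cont_Aut :: ('a\<Rightarrow>'a) set))"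
  shows "continuous_map (compact_open_topology (cont_Aut :: ('a\<Rightarrow>'a) set)) (compact_open_topology cont_Aut) inv"
proof -
  let ?T = "compact_open_topology (cont_Aut :: ('a\<Rightarrow>'a) set)"
  have Ec: "\<forall>f\<in>cont_Aut. continuous_on UNIV (f::'a\<Rightarrow>'a)" using aut_end end_iff by blast
  have cc: "continuous_map (prod_topology ?T ?T) ?T (\<lambda>(f,g). f \<circ> g)"
    by (rule comp_cont[OF P Ec aut_comp cpt])
  have haus: "Hausdorff_space ?T" using co_eq_pw[OF P cpt] pw_Haus[OF P] by simp
  have sid: "closedin ?T {id}" by (rule closedin_Hausdorff_singleton[OF haus]) (simp add: co_topspace aut_id)
  let ?G = "{p \<in> topspace (prod_topology ?T ?T). (\<lambda>(f,g). f \<circ> g) p \<in> {id}}"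
  have G: "closedin (prod_topology ?T ?T) ?G" by (rule closedin_continuous_map_preimage[OF cc sid])
  have "continuous_map ?T ?T inv"
    unfolding continuous_map_closedin
  proof (intro conjI allI impI)
    show "inv \<in> topspace ?T \<rightarrow> topspace ?T" using aut_inv by (auto simp: co_topspace)
    fix C assume C: "closedin ?T C"
    have "closedin (prod_topology ?T ?T) (cont_Aut \<times> C)"
      using C closedin_topspace[of ?T] by (simp add: closedin_prod_Times_iff co_topspace)
    then have K: "closedin (prod_topology ?T ?T) (?G \<inter> (cont_Aut \<times> C))" using G by (rule closedin_Int[rotated])
    have "closedin ?T (fst ` (?G \<inter> (cont_Aut \<times> C)))"
      using closed_map_fst[OF cpt, of ?T] K unfolding closed_map_def by blast
    moreover have "{f \<in> topspace ?T. inv f \<in> C} = fst ` (?G \<inter> (cont_Aut \<times> C))"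
    proof
      show "{f \<in> topspace ?T. inv f \<in> C} \<subseteq> fst ` (?G \<inter> (cont_Aut \<times> C))"
      proof
        fix f assume f: "f \<in> {f \<in> topspace ?T. inv f \<in> C}"
        then have fa: "f \<in> cont_Aut" "inv f \<in> C" by (auto simp: co_topspace)
        have ia: "inv f \<in> cont_Aut" "\<And>y. f (inv f y) = y" using aut_inv[OF fa(1)] by auto
        have "f \<circ> inv f = id" using ia(2) by (auto simp: fun_eq_iff)
        then have "(f, inv f) \<in> ?G \<inter> (cont_Aut \<times> C)" using fa ia by (simp add: co_topspace)
        then show "f \<in> fst ` (?G \<inter> (cont_Aut \<times> C))" by force
      qed
      show "fst ` (?G \<inter> (cont_Aut \<times> C)) \<subseteq> {f \<in> topspace ?T. inv f \<in> C}"
      proof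
        fix f assume "f \<in> fst ` (?G \<inter> (cont_Aut \<times> C))"
        then obtain g where g: "(f,g) \<in> ?G" "f \<in> cont_Aut" "g \<in> C" by force
        have fg: "f \<circ> g = id" using g(1) by simp
        have ia: "\<And>x. inv f (f x) = x" using aut_inv[OF g(2)] by auto
        have "inv f = g"
        proof
          fix y
          have "inv f y = inv f (f (g y))" using fg by (metis comp_apply id_apply)
          then show "inv f y = g y" using ia by simp
        qed
        then show "f \<in> {f \<in> topspace ?T. inv f \<in> C}" using g by (simp add: co_topspace)
      qed
    qed
    ultimately show "closedin ?T {f \<in> topspace ?T. inv f \<in> C}" by simp
  qed
  then show ?thesis .
qed

theorem theorem4:
  assumes "profinite_semigroup TYPE('a::{semigroup_mult,topological_space})"
  shows "(compact_space (compact_open_topology (cont_End :: ('a \<Rightarrow> 'a) set))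
            \<longleftrightarrow> has_fundamental_system_invariant (cont_End :: ('a \<Rightarrow> 'a) set))
       \<and> (compact_space (compact_open_topology (cont_Aut :: ('a \<Rightarrow> 'a) set))
            \<longleftrightarrow> has_fundamental_system_invariant (cont_Aut :: ('a \<Rightarrow> 'a) set))
       \<and> (compact_space (compact_open_topology (cont_End :: ('a \<Rightarrow> 'a) set)) \<longrightarrow>
            profinite_comp_monoid (compact_open_topology (cont_End :: ('a \<Rightarrow> 'a) set))
            \<and> compact_open_topology (cont_End :: ('a \<Rightarrow> 'a) set) = pointwise_topology cont_End)
       \<and> (compact_space (compact_open_topology (cont_Aut :: ('a \<Rightarrow> 'a) set)) \<longrightarrow>
            profinite_comp_group (compact_open_topology (cont_Aut :: ('a \<Rightarrow> 'a) set))
            \<and> compact_open_topology (cont_Aut :: ('a \<Rightarrow> 'a) set) = pointwise_topology cont_Aut)"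
proof -
  note P = assms
  have EcE: "\<forall>f\<in>cont_End. continuous_on UNIV (f::'a\<Rightarrow>'a)" using end_iff by blast
  have EcA: "\<forall>f\<in>cont_Aut. continuous_on UNIV (f::'a\<Rightarrow>'a)" using aut_end end_iff by blast
  have AE: "(cont_Aut :: ('a \<Rightarrow> 'a) set) \<subseteq> cont_End" using aut_end by blast
  have 1: "compact_space (compact_open_topology (cont_End :: ('a \<Rightarrow> 'a) set))
            \<longleftrightarrow> has_fundamental_system_invariant (cont_End :: ('a \<Rightarrow> 'a) set)"
    using compact_imp_fs[OF P subset_refl end_id end_comp] fs_end_compact[OF P] by blast
  have 2: "compact_space (compact_open_topology (cont_Aut :: ('a \<Rightarrow> 'a) set))
            \<longleftrightarrow> has_fundamental_system_invariant (cont_Aut :: ('a \<Rightarrow> 'a) set)"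
    using compact_imp_fs[OF P AE aut_id aut_comp] fs_aut_compact[OF P] by blast
  have mon: "profinite_comp_monoid (compact_open_topology E) \<and> compact_open_topology E = pointwise_topology E"
    if Ec: "\<forall>f\<in>E. continuous_on UNIV (f::'a\<Rightarrow>'a)"
    and Ecomp: "\<And>f g. f \<in> E \<Longrightarrow> g \<in> E \<Longrightarrow> f \<circ> g \<in> E"
    and cpt: "compact_space (compact_open_topology E)" for E
  proof -
    have eq: "compact_open_topology E = pointwise_topology E" by (rule co_eq_pw[OF P cpt])
    have "Hausdorff_space (compact_open_topology E)" unfolding eq by (rule pw_Haus[OF P])
    moreover have "totally_disconnected_space (compact_open_topology E)" unfolding eq by (rule pw_td[OF P])
    moreover have "continuous_map (prod_topology (compact_open_topology E) (compact_open_topology E)) (compact_open_topology E) (\<lambda>(f,g). f \<circ> g)"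
      by (rule comp_cont[OF P Ec Ecomp cpt])
    ultimately show ?thesis unfolding profinite_comp_monoid_def using cpt eq by blast
  qed
  have 3: "compact_space (compact_open_topology (cont_End :: ('a \<Rightarrow> 'a) set)) \<longrightarrow>
            profinite_comp_monoid (compact_open_topology (cont_End :: ('a \<Rightarrow> 'a) set))
            \<and> compact_open_topology (cont_End :: ('a \<Rightarrow> 'a) set) = pointwise_topology cont_End"
    using mon[OF EcE end_comp] by blast
  have 4: "compact_space (compact_open_topology (cont_Aut :: ('a \<Rightarrow> 'a) set)) \<longrightarrow>
            profinite_comp_group (compact_open_topology (cont_Aut :: ('a \<Rightarrow> 'a) set))
            \<and> compact_open_topology (cont_Aut :: ('a \<Rightarrow> 'a) set) = pointwise_topology cont_Aut"
  proof
    assume cpt: "compact_space (compact_open_topology (cont_Aut :: ('a \<Rightarrow> 'a) set))"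
    from mon[OF EcA aut_comp cpt] inv_cont[OF P cpt] show "profinite_comp_group (compact_open_topology (cont_Aut :: ('a \<Rightarrow> 'a) set))
            \<and> compact_open_topology (cont_Aut :: ('a \<Rightarrow> 'a) set) = pointwise_topology cont_Aut"
      unfolding profinite_comp_group_def by blast
  qed
  show ?thesis using 1 2 3 4 by blast
qed



end
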